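(* For every integer $n\ge 8$, $\bigl|\mathrm{LE}(n)\cap((n-1)!,\,n!]\bigr|<(n-3)!$.
   Context: All posets are finite. For a finite poset $P$, $\mathrm{ext}(P)$ denotes the number of linear extensions of $P$. For a positive integer $n$, $\mathrm{LE}(n)=\{\mathrm{ext}(P): P \text{ a poset with } |P|=n\}$. *)

theory Defs
  imports Main
begin

text \<open>A finite poset of size n is represented (up to isomorphism) as a partial order
  relation on the carrier {0..<n}. Its linear extensions are the linear orders on the
  same carrier containing it.\<close>

definition linear_extensions :: "nat set \<Rightarrow> nat rel \<Rightarrow> nat rel set" where
  "linear_extensions A r = {l. linear_order_on A l \<and> r \<subseteq> l}"

definition ext :: "nat set \<Rightarrow> nat rel \<Rightarrow> nat" where
  "ext A r = card (linear_extensions A r)"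

definition LE :: "nat \<Rightarrow> nat set" where
  "LE n = {ext {0..<n} r | r. partial_order_on {0..<n} r}"

end

theory Submission
  imports Defs
begin

definition res :: "nat set \<Rightarrow> nat rel \<Rightarrow> nat rel" where
  "res B r = r \<inter> (B \<times> B)"

definition maxs :: "nat set \<Rightarrow> nat rel \<Rightarrow> nat set" where
  "maxs A r = {x\<in>A. \<forall>y\<in>A. (x,y)\<in>r \<longrightarrow> y = x}"

definition isos :: "nat set \<Rightarrow> nat rel \<Rightarrow> nat set" where
  "isos A r = {x\<in>A. \<forall>y\<in>A. y \<noteq> x \<longrightarrow> (x,y)\<notin>r \<and> (y,x)\<notin>r}"

lemmas ord_defs = linear_order_on_def partial_order_on_def preorder_on_def refl_on_def
  trans_def antisym_def total_on_def

lemma res_res: "B \<subseteq> C \<Longrightarrow> res B (res C r) = res B r"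
  unfolding res_def by auto

lemma po_res: "partial_order_on A r \<Longrightarrow> B \<subseteq> A \<Longrightarrow> partial_order_on B (res B r)"
  unfolding res_def ord_defs by blast

lemma le_finite: "finite A \<Longrightarrow> finite (linear_extensions A r)"
proof -
  assume "finite A"
  have "linear_extensions A r \<subseteq> Pow (A \<times> A)"
    unfolding linear_extensions_def ord_defs by auto
  thus ?thesis using \<open>finite A\<close> by (meson finite_Pow_iff finite_SigmaI finite_subset)
qed

lemma top_exists:
  assumes "finite A" "A \<noteq> {}" "total_on A l" "trans l" "refl_on A l"
  shows "\<exists>x\<in>A. \<forall>y\<in>A. (y,x)\<in>l"
  using assms
proof (induction A rule: finite_ne_induct)
  case (singleton x)
  then show ?case by (auto simp: refl_on_def)
next
  case (insert a F)
  have "total_on F l" "refl_on F l" using insert.prems by (auto simp: total_on_def refl_on_def)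
  then obtain t where t: "t \<in> F" "\<forall>y\<in>F. (y,t)\<in>l" using insert by blast
  show ?case
  proof (cases "(t,a)\<in>l")
    case True
    then show ?thesis using t insert.prems by (auto simp: refl_on_def trans_def)
  next
    case False
    then have "(a,t)\<in>l" using insert.prems t by (auto simp: total_on_def refl_on_def)
    then show ?thesis using t by auto
  qed
qed

lemma lin_props: assumes "linear_order_on A l"
  shows "total_on A l" "trans l" "refl_on A l" "antisym l" "l \<subseteq> A \<times> A"
  using assms by (simp_all add: linear_order_on_def partial_order_on_def preorder_on_def)

lemma ext_rec:
  assumes fin: "finite A" and ne: "A \<noteq> {}" and po: "partial_order_on A r"
  shows "ext A r = (\<Sum>x\<in>maxs A r. ext (A-{x}) (res (A-{x}) r))"
proof -
  define T where "T x = {l\<in>linear_extensions A r. \<forall>y\<in>A. (y,x)\<in>l}" for x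
  have U: "linear_extensions A r = (\<Union>x\<in>maxs A r. T x)"
  proof
    show "(\<Union>x\<in>maxs A r. T x) \<subseteq> linear_extensions A r" unfolding T_def by auto
    show "linear_extensions A r \<subseteq> (\<Union>x\<in>maxs A r. T x)"
    proof
      fix l assume l: "l \<in> linear_extensions A r"
      then have lo: "linear_order_on A l" "r \<subseteq> l" unfolding linear_extensions_def by auto
      then obtain x where x: "x\<in>A" "\<forall>y\<in>A. (y,x)\<in>l"
        using top_exists[OF fin ne] lin_props[OF lo(1)] by blast
      have asl: "antisym l" using lin_props[OF lo(1)] by blast
      have "x \<in> maxs A r" unfolding maxs_def
      proof (intro CollectI conjI ballI impI)
        fix y assume "y \<in> A" "(x,y)\<in>r"
        then show "y = x" using x lo(2) asl by (meson antisymD subsetD)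
      qed (use x in auto)
      then show "l \<in> (\<Union>x\<in>maxs A r. T x)" using l x unfolding T_def by blast
    qed
  qed
  have D: "\<forall>x\<in>maxs A r. \<forall>y\<in>maxs A r. x\<noteq>y \<longrightarrow> T x \<inter> T y = {}"
  proof (intro ballI impI equalityI subsetI)
    fix x y l assume xy: "x\<in>maxs A r" "y\<in>maxs A r" "x \<noteq> y" and l: "l \<in> T x \<inter> T y"
    then have "x \<in> A" "y \<in> A" unfolding maxs_def by auto
    moreover have "antisym l" using l lin_props(4) unfolding T_def linear_extensions_def by blast
    ultimately show "l \<in> {}" using l xy unfolding T_def by (auto dest: antisymD)
  qed auto
  have F: "\<forall>x\<in>maxs A r. finite (T x)"
    using le_finite[OF fin] unfolding T_def by auto
  have C: "card (T x) = ext (A-{x}) (res (A-{x}) r)" if xm: "x\<in>maxs A r" for x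
  proof -
    have xA: "x \<in> A" using xm unfolding maxs_def by auto
    have "bij_betw (\<lambda>l. res (A-{x}) l) (T x) (linear_extensions (A-{x}) (res (A-{x}) r))"
    proof (rule bij_betw_byWitness[where f'="\<lambda>l. l \<union> (A \<times> {x})"])
      show "\<forall>l\<in>T x. res (A - {x}) l \<union> A \<times> {x} = l"
      proof
        fix l assume "l \<in> T x"
        then have lo: "linear_order_on A l" and top: "\<forall>y\<in>A. (y,x)\<in>l"
          unfolding T_def linear_extensions_def by auto
        note P = lin_props[OF lo]
        show "res (A - {x}) l \<union> A \<times> {x} = l"
        proof (intro equalityI subsetI)
          fix p assume "p \<in> res (A - {x}) l \<union> A \<times> {x}"
          then show "p \<in> l" using top unfolding res_def by auto
        next
          fix p assume p: "p \<in> l"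
          obtain a b where ab: "p = (a,b)" by (cases p)
          have abA: "a \<in> A" "b \<in> A" using P(5) p ab by auto
          show "p \<in> res (A - {x}) l \<union> A \<times> {x}"
          proof (cases "b = x")
            case True then show ?thesis using ab abA by auto
          next
            case False
            have "a \<noteq> x"
            proof
              assume "a = x"
              then have "(x,b)\<in>l" "(b,x)\<in>l" using p ab top abA by auto
              then show False using P(4) False by (auto dest: antisymD)
            qed
            then show ?thesis using False ab abA p unfolding res_def by auto
          qed
        qed
      qed
      show "\<forall>l\<in>linear_extensions (A - {x}) (res (A - {x}) r). res (A - {x}) (l \<union> A \<times> {x}) = l"
      proof
        fix l assume "l \<in> linear_extensions (A - {x}) (res (A - {x}) r)"
        then have "l \<subseteq> (A-{x}) \<times> (A-{x})" unfolding linear_extensions_def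
          using lin_props(5) by blast
        then show "res (A - {x}) (l \<union> A \<times> {x}) = l" unfolding res_def by auto
      qed
      show "(\<lambda>l. res (A - {x}) l) ` T x \<subseteq> linear_extensions (A - {x}) (res (A - {x}) r)"
      proof
        fix l' assume "l' \<in> (\<lambda>l. res (A - {x}) l) ` T x"
        then obtain l where l: "l \<in> T x" and l': "l' = res (A-{x}) l" by auto
        then have lo: "linear_order_on A l" and rl: "r \<subseteq> l"
          unfolding T_def linear_extensions_def by auto
        note P = lin_props[OF lo]
        have "linear_order_on (A-{x}) l'"
          unfolding linear_order_on_def partial_order_on_def preorder_on_def
        proof (intro conjI)
          show "l' \<subseteq> (A - {x}) \<times> (A - {x})" unfolding l' res_def by auto
          show "refl_on (A - {x}) l'" using P(3) unfolding l' res_def refl_on_def by auto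
          show "trans l'" using P(2) unfolding l' res_def trans_def by blast
          show "antisym l'" using P(4) unfolding l' res_def antisym_def by blast
          show "total_on (A - {x}) l'" using P(1) unfolding l' res_def total_on_def by blast
        qed
        moreover have "res (A-{x}) r \<subseteq> l'" using rl unfolding l' res_def by auto
        ultimately show "l' \<in> linear_extensions (A - {x}) (res (A - {x}) r)"
          unfolding linear_extensions_def by auto
      qed
      show "(\<lambda>l. l \<union> A \<times> {x}) ` linear_extensions (A - {x}) (res (A - {x}) r) \<subseteq> T x"
      proof
        fix l' assume "l' \<in> (\<lambda>l. l \<union> A \<times> {x}) ` linear_extensions (A - {x}) (res (A - {x}) r)"
        then obtain l where l: "l \<in> linear_extensions (A - {x}) (res (A - {x}) r)"
          and l': "l' = l \<union> A \<times> {x}" by auto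
        then have lo: "linear_order_on (A-{x}) l" and rl: "res (A-{x}) r \<subseteq> l"
          unfolding linear_extensions_def by auto
        note P = lin_props[OF lo]
        have lo': "linear_order_on A l'"
          unfolding linear_order_on_def partial_order_on_def preorder_on_def
        proof (intro conjI)
          show "l' \<subseteq> A \<times> A" unfolding l' using P(5) xA by auto
          show "refl_on A l'" using P(3) unfolding l' refl_on_def by auto
          show "trans l'" using P(5) unfolding l' trans_def
          proof (intro allI impI)
            fix a b c assume "(a,b) \<in> l \<union> A \<times> {x}" "(b,c) \<in> l \<union> A \<times> {x}"
            then show "(a,c) \<in> l \<union> A \<times> {x}" using P(2) P(5) xA
              unfolding trans_def by blast
          qed
          show "antisym l'" unfolding l' antisym_def
          proof (intro allI impI)
            fix a b assume "(a,b) \<in> l \<union> A \<times> {x}" "(b,a) \<in> l \<union> A \<times> {x}"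
            then show "a = b" using P(4) P(5) unfolding antisym_def by blast
          qed
          show "total_on A l'" using P(1) unfolding l' total_on_def by blast
        qed
        moreover have "r \<subseteq> l'"
        proof
          fix p assume p: "p \<in> r"
          obtain a b where ab: "p = (a,b)" by (cases p)
          have abA: "a \<in> A" "b \<in> A" using partial_order_onD(4)[OF po] p ab by auto
          show "p \<in> l'"
          proof (cases "b = x")
            case True then show ?thesis using ab abA l' by auto
          next
            case False
            then have "a \<noteq> x" using xm p ab abA unfolding maxs_def by auto
            then have "p \<in> res (A-{x}) r" using False ab abA p unfolding res_def by auto
            then show ?thesis using rl l' by auto
          qed
        qed
        moreover have "\<forall>y\<in>A. (y,x)\<in>l'" unfolding l' by auto
        ultimately show "l' \<in> T x" unfolding T_def linear_extensions_def by auto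
      qed
    qed
    then show ?thesis unfolding ext_def by (rule bij_betw_same_card)
  qed
  have "ext A r = card (\<Union>x\<in>maxs A r. T x)" unfolding ext_def using U by simp
  also have "\<dots> = (\<Sum>x\<in>maxs A r. card (T x))"
    by (rule card_UN_disjoint) (use fin F D in \<open>auto simp: maxs_def\<close>)
  also have "\<dots> = (\<Sum>x\<in>maxs A r. ext (A-{x}) (res (A-{x}) r))"
    using C by simp
  finally show ?thesis .
qed


lemma ext_empty: "partial_order_on {} r \<Longrightarrow> ext {} r = 1"
proof -
  assume "partial_order_on {} r"
  then have r: "r = {}" using partial_order_onD(4) by blast
  have "linear_extensions {} r = {{}}"
    unfolding linear_extensions_def r using lin_props(5) by fastforce
  then show ?thesis unfolding ext_def by simp
qed

lemma maxs_sub: "maxs A r \<subseteq> A" unfolding maxs_def by auto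
lemma isos_sub: "isos A r \<subseteq> A" unfolding isos_def by auto
lemma isos_maxs: "isos A r \<subseteq> maxs A r" unfolding isos_def maxs_def by auto

lemma ext_le_fact:
  assumes "finite A" "partial_order_on A r"
  shows "ext A r \<le> fact (card A)"
  using assms
proof (induction "card A" arbitrary: A r rule: less_induct)
  case less
  show ?case
  proof (cases "A = {}")
    case True then show ?thesis using ext_empty less.prems by simp
  next
    case False
    have n: "card A \<ge> 1" using False less.prems(1) by (simp add: Suc_leI card_gt_0_iff)
    have "ext A r = (\<Sum>x\<in>maxs A r. ext (A-{x}) (res (A-{x}) r))"
      using ext_rec[OF less.prems(1) False less.prems(2)] .
    also have "\<dots> \<le> (\<Sum>x\<in>maxs A r. fact (card A - 1))"
    proof (rule sum_mono)
      fix x assume x: "x \<in> maxs A r"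
      then have xA: "x \<in> A" using maxs_sub by auto
      have "card (A-{x}) < card A" using card_Diff1_less[OF less.prems(1) xA] .
      then have "ext (A-{x}) (res (A-{x}) r) \<le> fact (card (A-{x}))"
        using less.hyps xA less.prems po_res by (metis Diff_subset finite_Diff)
      then show "ext (A-{x}) (res (A-{x}) r) \<le> fact (card A - 1)" using xA by simp
    qed
    also have "\<dots> = card (maxs A r) * fact (card A - 1)" by simp
    also have "\<dots> \<le> card A * fact (card A - 1)"
      using card_mono[OF less.prems(1) maxs_sub] by simp
    also have "\<dots> = fact (card A)" using n by (simp add: fact_reduce)
    finally show ?thesis .
  qed
qed

lemma isos_del:
  assumes "x \<in> isos A r" "y \<in> A" "y \<noteq> x"
  shows "x \<in> isos (A-{y}) (res (A-{y}) r)"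
  using assms unfolding isos_def res_def by auto

lemma maxs_iso:
  assumes "x \<in> isos A r"
  shows "maxs A r - {x} = maxs (A-{x}) (res (A-{x}) r)"
  using assms unfolding isos_def maxs_def res_def by auto

lemma ext_iso:
  assumes "finite A" "partial_order_on A r" "x \<in> isos A r"
  shows "ext A r = card A * ext (A-{x}) (res (A-{x}) r)"
  using assms
proof (induction "card A" arbitrary: A r x rule: less_induct)
  case less
  have xA: "x \<in> A" using less.prems(3) isos_sub by auto
  have fin: "finite A" and po: "partial_order_on A r" using less.prems by auto
  have ne: "A \<noteq> {}" using xA by auto
  have xM: "x \<in> maxs A r" using less.prems(3) isos_maxs by auto
  let ?e = "\<lambda>y. ext (A-{y}) (res (A-{y}) r)"
  have "ext A r = (\<Sum>y\<in>maxs A r. ?e y)" using ext_rec[OF fin ne po] .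
  also have "\<dots> = ?e x + (\<Sum>y\<in>maxs A r - {x}. ?e y)"
    by (rule sum.remove[OF finite_subset[OF maxs_sub fin] xM])
  also have "(\<Sum>y\<in>maxs A r - {x}. ?e y) =
      (\<Sum>y\<in>maxs (A-{x}) (res (A-{x}) r). (card A - 1) * ext (A-{x}-{y}) (res (A-{x}-{y}) (res (A-{x}) r)))"
    unfolding maxs_iso[OF less.prems(3)]
  proof (rule sum.cong[OF refl])
    fix y assume y: "y \<in> maxs (A-{x}) (res (A-{x}) r)"
    then have yA: "y \<in> A" "y \<noteq> x" using maxs_sub by auto
    have lt: "card (A-{y}) < card A" using card_Diff1_less[OF fin yA(1)] .
    have "?e y = card (A-{y}) * ext (A-{y}-{x}) (res (A-{y}-{x}) (res (A-{y}) r))"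
      by (rule less.hyps[OF lt]) (use yA fin po less.prems(3) in \<open>auto intro: po_res isos_del\<close>)
    also have "A-{y}-{x} = A-{x}-{y}" by auto
    finally show "?e y = (card A - 1) * ext (A-{x}-{y}) (res (A-{x}-{y}) (res (A-{x}) r))"
    proof -
      have r1: "res (A-{x}-{y}) (res (A-{y}) r) = res (A-{x}-{y}) r" by (rule res_res) auto
      have r2: "res (A-{x}-{y}) (res (A-{x}) r) = res (A-{x}-{y}) r" by (rule res_res) auto
      have c: "card (A-{y}) = card A - 1" using yA fin by (simp add: card_Diff_singleton)
      show "?e y = card (A-{y}) * ext (A-{x}-{y}) (res (A-{x}-{y}) (res (A-{y}) r)) \<Longrightarrow>
        ?e y = (card A - 1) * ext (A-{x}-{y}) (res (A-{x}-{y}) (res (A-{x}) r))"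
        unfolding r1 r2 c by simp
    qed
  qed
  also have "\<dots> = (card A - 1) * ?e x"
  proof (cases "A - {x} = {}")
    case True
    then have "maxs (A-{x}) (res (A-{x}) r) = {}" using maxs_sub by blast
    moreover have "A = {x}" using True xA by auto
    ultimately show ?thesis by simp
  next
    case False
    have "?e x = (\<Sum>y\<in>maxs (A-{x}) (res (A-{x}) r). ext (A-{x}-{y}) (res (A-{x}-{y}) (res (A-{x}) r)))"
      by (rule ext_rec) (use fin False po in \<open>auto intro: po_res\<close>)
    then show ?thesis by (simp add: sum_distrib_left)
  qed
  finally have "ext A r = ?e x + (card A - 1) * ?e x" .
  moreover have "card A \<ge> 1" using fin ne by (simp add: Suc_leI card_gt_0_iff)
  ultimately show ?case by (cases "card A") auto
qed


lemma isos_iso_del: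
  assumes "x \<in> isos A r"
  shows "isos (A-{x}) (res (A-{x}) r) = isos A r - {x}"
  using assms unfolding isos_def res_def by auto

lemma nonisolated_witness:
  assumes "y \<in> maxs A r" "y \<notin> isos A r"
  obtains w where "w \<in> A" "w \<noteq> y" "(w,y) \<in> r"
  using assms unfolding maxs_def isos_def by blast

lemma ext_main:
  assumes "finite A" "partial_order_on A r" "card (isos A r) < card A"
  shows "(card A - card (isos A r)) * ext A r \<le> fact (card A)"
  using assms
proof (induction "card A" arbitrary: A r rule: less_induct)
  case less
  have fin: "finite A" and po: "partial_order_on A r" and lt: "card (isos A r) < card A"
    using less.prems by auto
  define n where "n = card A"
  define I where "I = isos A r"
  define M where "M = maxs A r - I"
  define j where "j = card I"
  define m where "m = n - j"
  have ne: "A \<noteq> {}" using lt by auto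
  have n1: "n \<ge> 1" using fin ne unfolding n_def by (simp add: Suc_leI card_gt_0_iff)
  have finI: "finite I" using finite_subset[OF isos_sub fin] unfolding I_def .
  have finM: "finite M" using finite_subset[OF maxs_sub fin] unfolding M_def by simp
  let ?e = "\<lambda>y. ext (A-{y}) (res (A-{y}) r)"
  have split: "maxs A r = I \<union> M" "I \<inter> M = {}" using isos_maxs unfolding I_def M_def by auto
  have "ext A r = (\<Sum>y\<in>maxs A r. ?e y)" using ext_rec[OF fin ne po] .
  also have "\<dots> = (\<Sum>y\<in>I. ?e y) + (\<Sum>y\<in>M. ?e y)"
    unfolding split(1) by (rule sum.union_disjoint[OF finI finM split(2)])
  finally have eA: "ext A r = (\<Sum>y\<in>I. ?e y) + (\<Sum>y\<in>M. ?e y)" .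
  have partI: "m * (\<Sum>y\<in>I. ?e y) \<le> j * fact (n-1)"
  proof -
    have "m * ?e y \<le> fact (n-1)" if y: "y \<in> I" for y
    proof -
      have yA: "y \<in> A" using y isos_sub unfolding I_def by auto
      have c1: "card (A-{y}) = n - 1" using fin yA unfolding n_def by simp
      have c2: "card (isos (A-{y}) (res (A-{y}) r)) = j - 1"
        using y finI unfolding isos_iso_del[OF y[unfolded I_def]] j_def I_def by simp
      have j1: "j \<ge> 1" using y finI unfolding j_def by (metis One_nat_def Suc_leI card_gt_0_iff empty_iff)
      have jn: "j < n" using lt unfolding j_def n_def I_def .
      have "(card (A-{y}) - card (isos (A-{y}) (res (A-{y}) r))) * ?e y \<le> fact (card (A-{y}))"
        by (rule less.hyps) (use card_Diff1_less[OF fin yA] fin yA po c1 c2 j1 jn in \<open>auto intro: po_res\<close>)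
      moreover have "n - 1 - (j - 1) = m" using j1 jn unfolding m_def by simp
      ultimately show ?thesis unfolding c1 c2 by simp
    qed
    then have "(\<Sum>y\<in>I. m * ?e y) \<le> (\<Sum>y\<in>I. fact (n-1))" by (rule sum_mono)
    then show ?thesis by (simp add: sum_distrib_left j_def)
  qed
  have partM: "(\<Sum>y\<in>M. ?e y) \<le> fact (n-1)"
  proof (cases "card M \<le> 1")
    case True
    show ?thesis
    proof (cases "M = {}")
      case True then show ?thesis by simp
    next
      case False
      then obtain x where xM: "x \<in> M" by auto
      have "M = {x}" using True finM xM card_le_Suc0_iff_eq[OF finM] by auto
      then have xA: "x \<in> A" unfolding M_def using maxs_sub by auto
      have "?e x \<le> fact (card (A-{x}))" by (rule ext_le_fact) (use fin po xA in \<open>auto intro: po_res\<close>)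
      then show ?thesis using \<open>M = {x}\<close> fin xA unfolding n_def by simp
    qed
  next
    case False
    define s where "s = card M"
    have s2: "s \<ge> 2" using False unfolding s_def by simp
    have "s * ?e x \<le> fact (n-1)" if x: "x \<in> M" for x
    proof -
      have xA: "x \<in> A" and xmax: "x \<in> maxs A r" using x maxs_sub unfolding M_def by auto
      let ?B = "A - {x}" let ?rB = "res (A-{x}) r"
      define NI where "NI = ?B - isos ?B ?rB"
      have finB: "finite ?B" using fin by simp
      have cNI: "card NI = card ?B - card (isos ?B ?rB)"
        unfolding NI_def by (rule card_Diff_subset[OF finite_subset[OF isos_sub finB] isos_sub])
      have MsubNI: "M - {x} \<subseteq> NI"
      proof
        fix y assume y: "y \<in> M - {x}"
        then have ym: "y \<in> maxs A r" "y \<notin> isos A r" "y \<noteq> x" unfolding M_def I_def by auto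
        obtain w where w: "w \<in> A" "w \<noteq> y" "(w,y) \<in> r" using nonisolated_witness[OF ym(1,2)] by blast
        have "w \<noteq> x" using w xmax ym(3) ym(1) maxs_sub[of A r] unfolding maxs_def by auto
        then show "y \<in> NI" using w ym maxs_sub unfolding NI_def isos_def res_def by auto
      qed
      have "M - {x} \<noteq> {}"
      proof
        assume "M - {x} = {}"
        then have "M \<subseteq> {x}" by auto
        then have "card M \<le> 1" using card_mono[of "{x}" M] by simp
        then show False using s2 unfolding s_def by simp
      qed
      then obtain y where y: "y \<in> M - {x}" by auto
      then have ym: "y \<in> maxs A r" "y \<notin> isos A r" "y \<noteq> x" unfolding M_def I_def by auto
      obtain w where w: "w \<in> A" "w \<noteq> y" "(w,y) \<in> r" using nonisolated_witness[OF ym(1,2)] by blast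
      have wx: "w \<noteq> x" using w xmax ym(3) ym(1) maxs_sub[of A r] unfolding maxs_def by auto
      have wM: "w \<notin> M" using w ym(1) maxs_sub[of A r] unfolding M_def maxs_def by auto
      have yA: "y \<in> A" using ym(1) maxs_sub by auto
      have wy: "(w,y) \<in> ?rB" using w wx ym(3) yA unfolding res_def by auto
      have "w \<notin> isos ?B ?rB"
      proof
        assume "w \<in> isos ?B ?rB"
        then have "\<forall>z\<in>?B. z \<noteq> w \<longrightarrow> (w,z) \<notin> ?rB" unfolding isos_def by auto
        then show False using wy yA ym(3) w(2) by auto
      qed
      then have wNI: "w \<in> NI" using w wx unfolding NI_def by auto
      have "insert w (M - {x}) \<subseteq> NI" using MsubNI wNI by auto
      then have "card (insert w (M - {x})) \<le> card NI"
        by (rule card_mono[rotated]) (use finB in \<open>simp add: NI_def\<close>)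
      moreover have "card (insert w (M - {x})) = s"
        using wM finM x card_gt_0_iff[of M] unfolding s_def by (auto simp add: card_Diff_singleton)
      ultimately have sk: "s \<le> card ?B - card (isos ?B ?rB)" using cNI by simp
      have "(card ?B - card (isos ?B ?rB)) * ?e x \<le> fact (card ?B)"
        by (rule less.hyps) (use card_Diff1_less[OF fin xA] fin xA po sk s2 in \<open>auto intro: po_res\<close>)
      moreover have "s * ?e x \<le> (card ?B - card (isos ?B ?rB)) * ?e x" using sk by simp
      ultimately have "s * ?e x \<le> fact (card ?B)" by (rule_tac order.trans) assumption+
      moreover have "card ?B = n - 1" using fin xA unfolding n_def by simp
      ultimately show ?thesis by simp
    qed
    then have "(\<Sum>y\<in>M. s * ?e y) \<le> (\<Sum>y\<in>M. fact (n-1))" by (rule sum_mono)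
    then have "s * (\<Sum>y\<in>M. ?e y) \<le> s * fact (n-1)" by (simp add: sum_distrib_left s_def)
    then show ?thesis using s2 by simp
  qed
  have "m * ext A r = m * (\<Sum>y\<in>I. ?e y) + m * (\<Sum>y\<in>M. ?e y)" unfolding eA by (simp add: algebra_simps)
  also have "\<dots> \<le> j * fact (n-1) + m * fact (n-1)" using partI partM by (simp add: add_mono)
  also have "\<dots> = n * fact (n-1)" unfolding m_def using lt unfolding j_def n_def I_def
    by (simp add: add_mult_distrib[symmetric])
  also have "\<dots> = fact n" using n1 by (simp add: fact_reduce)
  finally show ?case unfolding m_def n_def j_def I_def .
qed


definition GE :: "nat \<Rightarrow> nat set" where
  "GE k = {ext B s | B s. finite B \<and> card B = k \<and> partial_order_on B s}"

definition V :: "nat \<Rightarrow> nat set" where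
  "V k = GE k \<inter> {fact (k-1)<..fact k}"

definition cc :: "nat \<Rightarrow> nat" where
  "cc n = fact (n-2) - fact (n-1) div n"

lemma V_fin: "finite (V k)" unfolding V_def by simp

lemma V_step:
  assumes n2: "n \<ge> 2"
  shows "V n \<subseteq> (\<lambda>m. n*m) ` (V (n-1) \<union> {fact (n-1) div n <.. fact (n-2)})"
proof
  fix v assume "v \<in> V n"
  then obtain B s where v: "v = ext B s" and fin: "finite B" and cB: "card B = n"
    and po: "partial_order_on B s" and gt: "fact (n-1) < v" and le: "v \<le> fact n"
    unfolding V_def GE_def by auto
  have fn: "fact n = n * fact (n-1)" using n2 by (simp add: fact_reduce)
  have "isos B s \<noteq> {}"
  proof
    assume e: "isos B s = {}"
    have "(card B - card (isos B s)) * ext B s \<le> fact (card B)"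
      by (rule ext_main[OF fin po]) (use e cB n2 in auto)
    then have "n * v \<le> n * fact (n-1)" using e cB v fn by simp
    then have "v \<le> fact (n-1)" using n2 by simp
    then show False using gt by simp
  qed
  then obtain x where x: "x \<in> isos B s" by auto
  then have xB: "x \<in> B" using isos_sub by auto
  define m where "m = ext (B-{x}) (res (B-{x}) s)"
  have vm: "v = n * m" unfolding m_def v using ext_iso[OF fin po x] cB by simp
  have po': "partial_order_on (B-{x}) (res (B-{x}) s)" using po by (rule po_res) auto
  have cB': "card (B-{x}) = n-1" using cB fin xB by simp
  have mGE: "m \<in> GE (n-1)" unfolding GE_def m_def using fin po' cB' by blast
  have mle: "m \<le> fact (n-1)" unfolding m_def using ext_le_fact[OF _ po'] fin cB' by simp
  have mgt: "fact (n-1) div n < m"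
  proof (rule ccontr)
    assume "\<not> fact (n-1) div n < m"
    then have "m \<le> fact (n-1) div n" by simp
    then have "n * m \<le> n * (fact (n-1) div n)" by simp
    also have "\<dots> \<le> fact (n-1)" by simp
    finally show False using gt vm by simp
  qed
  have "m \<in> V (n-1) \<union> {fact (n-1) div n <.. fact (n-2)}"
  proof (cases "fact (n-2) < m")
    case True
    then have "m \<in> V (n-1)" unfolding V_def using mGE mle
      by (simp add: numeral_2_eq_2 diff_diff_left)
    then show ?thesis by simp
  next
    case False
    then show ?thesis using mgt by simp
  qed
  then show "v \<in> (\<lambda>m. n*m) ` (V (n-1) \<union> {fact (n-1) div n <.. fact (n-2)})"
    using vm by blast
qed

lemma card_step:
  assumes "n \<ge> 2"
  shows "card (V n) \<le> card (V (n-1)) + cc n"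
proof -
  have "card (V n) \<le> card ((\<lambda>m. n*m) ` (V (n-1) \<union> {fact (n-1) div n <.. fact (n-2)}))"
    by (rule card_mono[OF _ V_step[OF assms]]) (simp add: V_fin)
  also have "\<dots> \<le> card (V (n-1) \<union> {fact (n-1) div n <.. fact (n-2)})"
    by (rule card_image_le) (simp add: V_fin)
  also have "\<dots> \<le> card (V (n-1)) + card {fact (n-1) div n <.. fact (n-2)}"
    by (rule card_Un_le)
  also have "card {fact (n-1) div n <.. fact (n-2)} = cc n" unfolding cc_def by simp
  finally show ?thesis .
qed

lemma V1: "V 1 = {}" unfolding V_def by auto

lemma cc_vals: "cc 2 = 1" "cc 3 = 1" "cc 4 = 1" "cc 5 = 2" "cc 6 = 4" "cc 7 = 18" "cc 8 = 90"
  unfolding cc_def by (simp_all add: fact_numeral)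

lemma V8: "card (V 8) < fact 5"
proof -
  have "card (V 2) \<le> 1" using card_step[of 2] V1 cc_vals by simp
  then have "card (V 3) \<le> 2" using card_step[of 3] cc_vals by simp
  then have "card (V 4) \<le> 3" using card_step[of 4] cc_vals by simp
  then have "card (V 5) \<le> 5" using card_step[of 5] cc_vals by simp
  then have "card (V 6) \<le> 9" using card_step[of 6] cc_vals by simp
  then have "card (V 7) \<le> 27" using card_step[of 7] cc_vals by simp
  then have "card (V 8) \<le> 117" using card_step[of 8] cc_vals by simp
  then show ?thesis by (simp add: fact_numeral)
qed


lemma cc_bound:
  assumes "n \<ge> 2"
  shows "n * cc n \<le> fact (n-2) + n"
proof -
  define F :: nat where "F = fact (n-2)"
  define a :: nat where "a = fact (n-1)"
  define q where "q = a div n"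
  obtain m where nm: "n = Suc (Suc m)" using assms by (metis add_2_eq_Suc le_Suc_ex)
  have aF: "a = (n-1) * F" unfolding a_def F_def nm by simp
  have nF: "n * F = a + F" using aF assms by (cases n) auto
  have dm: "n * q + a mod n = a" unfolding q_def by simp
  have md: "a mod n < n" using assms by simp
  have "n * cc n = n * (F - q)" unfolding cc_def F_def q_def a_def by simp
  also have "\<dots> = n * F - n * q" by (simp add: diff_mult_distrib2)
  finally show ?thesis using nF dm md unfolding F_def by linarith
qed

lemma V_bound:
  assumes "n \<ge> 8"
  shows "card (V n) < fact (n-3)"
  using assms
proof (induction n rule: nat_induct_at_least)
  case base
  then show ?case using V8 by simp
next
  case (Suc n)
  define k where "k = n - 3"
  define f :: nat where "f = fact k"
  have k5: "k \<ge> 5" using Suc.hyps unfolding k_def by simp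
  have f0: "f > 0" unfolding f_def by simp
  have n: "Suc n = k + 4" using Suc.hyps unfolding k_def by simp
  have IH: "card (V n) < f" using Suc.IH unfolding f_def k_def .
  have st: "card (V (Suc n)) \<le> card (V n) + cc (Suc n)" using card_step[of "Suc n"] Suc.hyps by simp
  have cb: "(k+4) * cc (Suc n) \<le> fact (k+2) + (k+4)"
    using cc_bound[of "Suc n"] Suc.hyps n by (simp add: numeral_eq_Suc)
  have f2: "fact (k+2) = (k+2)*((k+1)*f)" unfolding f_def by (simp add: numeral_eq_Suc)
  have f1: "fact (Suc n - 3) = (k+1)*f" unfolding f_def using n by (simp add: numeral_eq_Suc)
  obtain j where kj: "k = j + 5" using k5 by (metis add.commute le_Suc_ex)
  have eq: "(j+9)*f + (j+7)*((j+6)*f) + (j+3)*f = (j+9)*((j+6)*f)"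
    by (simp add: algebra_simps)
  have "(j+3)*f > 0" using f0 by simp
  moreover have "k+4 = j+9" "k+2 = j+7" "k+1 = j+6" using kj by simp_all
  ultimately have key: "(k+4)*f + (k+2)*((k+1)*f) < (k+4)*((k+1)*f)" using eq
    by (simp only:)
  have hV: "(k+4)*card (V n) \<le> (k+4)*(f-1)" using IH by simp
  have "(k+4) * (card (V n) + cc (Suc n)) = (k+4)*card (V n) + (k+4) * cc (Suc n)"
    by (rule add_mult_distrib2)
  also have "\<dots> \<le> (k+4)*(f-1) + (k+2)*((k+1)*f) + (k+4)"
    using hV cb unfolding f2 by linarith
  finally have "(k+4) * (card (V n) + cc (Suc n)) \<le> (k+4)*(f-1) + (k+2)*((k+1)*f) + (k+4)" .
  also have "\<dots> = (k+4)*f + (k+2)*((k+1)*f)"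
  proof -
    have "(k+4)*(f-1) + (k+4) = (k+4)*f" using f0 by (cases f) auto
    then show ?thesis by linarith
  qed
  also have "\<dots> < (k+4)*((k+1)*f)" by (rule key)
  finally have "card (V n) + cc (Suc n) < (k+1)*f" by (simp only: mult_less_cancel1)
  then show ?case using st f1 by simp
qed

theorem theorem1p3:
  fixes n :: nat
  assumes "n \<ge> 8"
  shows "card (LE n \<inter> {fact (n - 1)<..fact n}) < fact (n - 3)"
proof -
  have "LE n \<inter> {fact (n - 1)<..fact n} \<subseteq> V n"
    unfolding LE_def V_def GE_def by fastforce
  then have "card (LE n \<inter> {fact (n - 1)<..fact n}) \<le> card (V n)"
    by (rule card_mono[OF V_fin])
  then show ?thesis using V_bound[OF assms] by simp
qed

end
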